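(* Let $\mathbf{x}\in\mathrm{Mat}_{m\times n}(\mathbb{C}^* )$ and $i\in[m-1]$. Then $s_i(\mathbf{x})=R_i(\mathbf{x})$, where $s_i(\mathbf{x})=e_i^{\varepsilon_i(\mathbf{x})/\varphi_i(\mathbf{x})}(\mathbf{x})=e_i^{\pi_{i+1}/\pi_i}(\mathbf{x})$.
   Context: Rows $\mathbf{x}_i=(x_i^1,\dots,x_i^n)$, $\pi_i=\prod_{j=1}^nx_i^j$. For $u,v\in(\mathbb{C}^* )^n$, $\sigma^j(u,v;c)=\sum_{r=1}^nc^{\mathbb{1}_{r\le j}}v^1\cdots v^{r-1}u^{r+1}\cdots u^n$, $\sigma(u,v)=\sigma^j(u,v;1)$. The basic $\mathrm{GL}_m$-geometric crystal structure on $m\times n$ matrices (the product $(X_m)^n$ over columns) has $\varepsilon_i(\mathbf{x})=\pi_{i+1}/\sigma(\mathbf{x}_i,\mathbf{x}_{i+1})$, $\varphi_i(\mathbf{x})=\pi_i/\sigma(\mathbf{x}_i,\mathbf{x}_{i+1})$, and $e_i^c$ fixes rows other than $i,i+1$ and replaces $x_i^j$ by $x_i^j\sigma^j/\sigma^{j-1}$ and $x_{i+1}^j$ by $x_{i+1}^j\sigma^{j-1}/\sigma^j$ with $\sigma^k=\sigma^k(\mathbf{x}_i,\mathbf{x}_{i+1};c)$. The geometric $R$-matrix is $R((x_1,\dots,x_n),(y_1,\dots,y_n))=((y_1',\dots,y_n'),(x_1',\dots,x_n'))$ with $y'_j=y_j\kappa_{j+1}/\kappa_j$, $x'_j=x_j\kappa_j/\kappa_{j+1}$,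 $\kappa_r=\sum_{k=0}^{n-1}y_r\cdots y_{r+k-1}x_{r+k+1}\cdots x_{r+n-1}$ (subscripts mod $n$); $R_i$ replaces rows $(\mathbf{x}_i,\mathbf{x}_{i+1})$ by $(\mathbf{x}'_{i+1},\mathbf{x}'_i)$, where $(\mathbf{x}'_{i+1},\mathbf{x}'_i)=R(\mathbf{x}_i,\mathbf{x}_{i+1})$. *)

theory Defs
  imports Complex_Main
begin

text \<open>Matrices are functions x :: nat => nat => complex, entry x i j in row i, column j,
  indices 1-based (rows 1..m, columns 1..n). A row is a function nat => complex.\<close>

definition rowprod :: "nat \<Rightarrow> (nat \<Rightarrow> nat \<Rightarrow> complex) \<Rightarrow> nat \<Rightarrow> complex" where
  "rowprod n x i = (\<Prod>j=1..n. x i j)"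

definition sigma_c :: "nat \<Rightarrow> (nat \<Rightarrow> complex) \<Rightarrow> (nat \<Rightarrow> complex) \<Rightarrow> nat \<Rightarrow> complex \<Rightarrow> complex" where
  "sigma_c n u v j c = (\<Sum>r=1..n. (if r \<le> j then c else 1) * (\<Prod>k=1..<r. v k) * (\<Prod>k=r+1..n. u k))"

text \<open>sigma(u,v) = sigma^j(u,v;1) (independent of j)\<close>
definition sigma :: "nat \<Rightarrow> (nat \<Rightarrow> complex) \<Rightarrow> (nat \<Rightarrow> complex) \<Rightarrow> complex" where
  "sigma n u v = sigma_c n u v n 1"

definition eps :: "nat \<Rightarrow> nat \<Rightarrow> (nat \<Rightarrow> nat \<Rightarrow> complex) \<Rightarrow> complex" where
  "eps n i x = rowprod n x (i+1) / sigma n (x i) (x (i+1))"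

definition phi :: "nat \<Rightarrow> nat \<Rightarrow> (nat \<Rightarrow> nat \<Rightarrow> complex) \<Rightarrow> complex" where
  "phi n i x = rowprod n x i / sigma n (x i) (x (i+1))"

definition e_op :: "nat \<Rightarrow> nat \<Rightarrow> complex \<Rightarrow> (nat \<Rightarrow> nat \<Rightarrow> complex) \<Rightarrow> (nat \<Rightarrow> nat \<Rightarrow> complex)" where
  "e_op n i c x = (\<lambda>a b.
     (let s = (\<lambda>k. sigma_c n (x i) (x (i+1)) k c) in
      if 1 \<le> b \<and> b \<le> n then
        (if a = i then x i b * s b / s (b - 1)
         else if a = i + 1 then x (i+1) b * s (b - 1) / s b
         else x a b)
      else x a b))"

definition s_op :: "nat \<Rightarrow> nat \<Rightarrow> (nat \<Rightarrow> nat \<Rightarrow> complex) \<Rightarrow> (nat \<Rightarrow> nat \<Rightarrow> complex)" where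
  "s_op n i x = e_op n i (eps n i x / phi n i x) x"

text \<open>Reduce an index into 1..n modulo n.\<close>
definition idx :: "nat \<Rightarrow> nat \<Rightarrow> nat" where
  "idx n k = (k + n - 1) mod n + 1"

definition kappa :: "nat \<Rightarrow> (nat \<Rightarrow> complex) \<Rightarrow> (nat \<Rightarrow> complex) \<Rightarrow> nat \<Rightarrow> complex" where
  "kappa n x y r = (\<Sum>k=0..<n. (\<Prod>t=0..<k. y (idx n (r + t))) * (\<Prod>t=k+1..<n. x (idx n (r + t))))"

definition geomR :: "nat \<Rightarrow> (nat \<Rightarrow> complex) \<Rightarrow> (nat \<Rightarrow> complex) \<Rightarrow> (nat \<Rightarrow> complex) \<times> (nat \<Rightarrow> complex)" where
  "geomR n x y =
     ((\<lambda>j. y j * kappa n x y (idx n (j+1)) / kappa n x y j),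
      (\<lambda>j. x j * kappa n x y j / kappa n x y (idx n (j+1))))"

text \<open>R_i replaces rows (x_i, x_{i+1}) by (x'_{i+1}, x'_i) where (x'_{i+1}, x'_i) = R(x_i, x_{i+1}).\<close>
definition R_op :: "nat \<Rightarrow> nat \<Rightarrow> (nat \<Rightarrow> nat \<Rightarrow> complex) \<Rightarrow> (nat \<Rightarrow> nat \<Rightarrow> complex)" where
  "R_op n i x = (\<lambda>a b.
     if 1 \<le> b \<and> b \<le> n then
       (if a = i then fst (geomR n (x i) (x (i+1))) b
        else if a = i + 1 then snd (geomR n (x i) (x (i+1))) b
        else x a b)
     else x a b)"

end

theory Submission
  imports Defs
begin

lemma idx_low: "1 \<le> s \<Longrightarrow> s \<le> n \<Longrightarrow> idx n s = s"
proof -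
  assume a: "1 \<le> s" "s \<le> n"
  have "s + n - 1 = (s-1) + n" using a by simp
  have m: "((s-1) + n) mod n = (s-1) mod n" by (rule mod_add_self2)
  have "s - 1 < n" using a by simp
  then have "(s-1) mod n = s - 1" by (rule mod_less)
  then have "(s + n - 1) mod n = s - 1" using m \<open>s + n - 1 = (s-1) + n\<close> by simp
  then show ?thesis unfolding idx_def using a by simp
qed

lemma idx_high: "n < s \<Longrightarrow> s \<le> 2*n \<Longrightarrow> idx n s = s - n"
proof -
  assume a: "n < s" "s \<le> 2*n"
  have "(s + n - 1) mod n = s - n - 1"
  proof -
    have "s + n - 1 = (s - n - 1) + 2*n" using a by simp
    moreover have "s - n - 1 < n" using a by simp
    ultimately show ?thesis by (simp only: mod_mult_self1 mod_less)
  qed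
  then show ?thesis unfolding idx_def using a by simp
qed

lemma idx_idx: "1 \<le> n \<Longrightarrow> idx n (idx n a + t) = idx n (a + t)"
proof -
  assume n: "1 \<le> n"
  have "idx n a + t + n - 1 = (a + n - 1) mod n + (t + n)" unfolding idx_def using n by simp
  then have "(idx n a + t + n - 1) mod n = ((a + n - 1) + (t + n)) mod n" by (simp add: mod_add_left_eq)
  also have "(a + n - 1) + (t + n) = (a + t + n - 1) + n" using n by simp
  finally show ?thesis unfolding idx_def[of n "idx n a + t"] idx_def[of n "a+t"] by simp
qed

lemma prod_shift: "(\<Prod>t=a..<b. f (idx n (c+t))) = (\<Prod>s=c+a..<c+b. f (idx n s))"
  using prod.shift_bounds_nat_ivl[of "\<lambda>s. f (idx n s)" a c b] by (simp add: add.commute)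

lemma prod_low: "1 \<le> p \<Longrightarrow> q \<le> n+1 \<Longrightarrow> (\<Prod>s=p..<q. f (idx n s)) = (\<Prod>s=p..<q. f s)"
  by (rule prod.cong) (auto simp: idx_low)

lemma prod_high: "n+1 \<le> p \<Longrightarrow> q \<le> 2*n+1 \<Longrightarrow> p \<le> q \<Longrightarrow> (\<Prod>s=p..<q. f (idx n s)) = (\<Prod>s=p-n..<q-n. f s)"
proof -
  assume a: "n+1 \<le> p" "q \<le> 2*n+1" "p \<le> q"
  have "(\<Prod>s=p-n..<q-n. f s) = (\<Prod>s=(p-n)+n..<(q-n)+n. f (s - n))"
    using prod.shift_bounds_nat_ivl[of "\<lambda>s. f (s - n)" "p-n" n "q-n"] by simp
  also have "\<dots> = (\<Prod>s=p..<q. f (idx n s))"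
    using a by (intro prod.cong) (auto simp: idx_high)
  finally show ?thesis by simp
qed

lemma ivl_cl: "{a..b} = {a..<b+(1::nat)}" by auto

lemma key:
  fixes u v :: "nat \<Rightarrow> complex"
  assumes n: "1 \<le> n" "j \<le> n" and u: "\<forall>k\<in>{1..n}. u k \<noteq> 0"
  shows "sigma_c n u v j ((\<Prod>k=1..<n+1. v k) / (\<Prod>k=1..<n+1. u k)) * (\<Prod>k=1..<j+1. u k)
       = kappa n u v (idx n (j+1)) * (\<Prod>k=1..<j+1. v k)"
proof -
  define c where "c = (\<Prod>k=1..<n+1. v k) / (\<Prod>k=1..<n+1. u k)"
  define S where "S r = (if r \<le> j then c else 1) * (\<Prod>k=1..<r. v k) * (\<Prod>k=r+1..<n+1. u k)" for r
  define T where "T k = (\<Prod>t=0..<k. v (idx n (j+1+t))) * (\<Prod>t=k+1..<n. u (idx n (j+1+t)))" for k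
  define U where "U = (\<Prod>k=1..<j+1. u k)"
  define V where "V = (\<Prod>k=1..<j+1. v k)"
  have pu: "(\<Prod>k=1..<n+1. u k) \<noteq> 0" using u by (auto simp: prod_zero_iff)
  have sig: "sigma_c n u v j c = (\<Sum>r=1..<n+1. S r)"
    unfolding sigma_c_def S_def ivl_cl by simp
  have kap: "kappa n u v (idx n (j+1)) = (\<Sum>k=0..<n. T k)"
    unfolding kappa_def T_def using idx_idx[OF n(1)] by (simp add: add.commute add.left_commute)
  have s1: "(\<Sum>r=1..<n+1. S r) = (\<Sum>r=1..<j+1. S r) + (\<Sum>r=j+1..<n+1. S r)"
    using n sum.atLeastLessThan_concat[of 1 "j+1" "n+1" S] by simp
  have t1: "(\<Sum>k=0..<n. T k) = (\<Sum>k=0..<n-j. T k) + (\<Sum>k=n-j..<n. T k)"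
    using n sum.atLeastLessThan_concat[of 0 "n-j" n T] by simp
  have a1: "(\<Sum>r=j+1..<n+1. S r) = (\<Sum>k=0..<n-j. S (k+(j+1)))"
    using sum.shift_bounds_nat_ivl[of S 0 "j+1" "n-j"] n by simp
  have a2: "(\<Sum>r=1..<j+1. S r) = (\<Sum>k=0..<j. S (k+1))"
    using sum.shift_bounds_nat_ivl[of S 0 1 j] by simp
  have b2: "(\<Sum>k=n-j..<n. T k) = (\<Sum>k=0..<j. T (k+(n-j)))"
    using sum.shift_bounds_nat_ivl[of T 0 "n-j" j] n by simp
  have c1: "S (k+(j+1)) * U = T k * V" if k: "k < n - j" for k
  proof -
    define r where "r = k + j + 1"
    have r: "j < r" "r \<le> n" using k n unfolding r_def by auto
    have e: "j+1+0 = j+1" "j+1+k = r" "j+1+(k+1) = r+1" unfolding r_def by simp_all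
    have T1: "(\<Prod>t=0..<k. v (idx n (j+1+t))) = (\<Prod>s=j+1..<r. v s)"
      unfolding prod_shift e by (rule prod_low) (use r in auto)
    have "(\<Prod>t=k+1..<n. u (idx n (j+1+t))) = (\<Prod>s=r+1..<j+1+n. u (idx n s))"
      unfolding prod_shift e ..
    also have "\<dots> = (\<Prod>s=r+1..<n+1. u (idx n s)) * (\<Prod>s=n+1..<j+1+n. u (idx n s))"
      by (rule prod.atLeastLessThan_concat[symmetric]) (use r in auto)
    also have "(\<Prod>s=r+1..<n+1. u (idx n s)) = (\<Prod>s=r+1..<n+1. u s)"
      by (rule prod_low) auto
    also have "(\<Prod>s=n+1..<j+1+n. u (idx n s)) = (\<Prod>s=1..<j+1. u s)"
      using prod_high[of n "n+1" "j+1+n" u] n by simp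
    finally have T2: "(\<Prod>t=k+1..<n. u (idx n (j+1+t))) = (\<Prod>s=r+1..<n+1. u s) * U"
      unfolding U_def .
    have V1: "(\<Prod>k=1..<r. v k) = V * (\<Prod>s=j+1..<r. v s)"
      unfolding V_def by (rule prod.atLeastLessThan_concat[symmetric]) (use r in auto)
    have e2: "k+(j+1) = r" unfolding r_def by simp
    have "S r = (\<Prod>k=1..<r. v k) * (\<Prod>k=r+1..<n+1. u k)"
      unfolding S_def using r by simp
    then show ?thesis unfolding T_def T1 T2 V1 e2 by (simp add: algebra_simps)
  qed
  have c2: "S (k+1) * U = T (k+(n-j)) * V" if k: "k < j" for k
  proof -
    define r where "r = k + 1"
    have r: "1 \<le> r" "r \<le> j" using k unfolding r_def by auto
    define A where "A = (\<Prod>s=1..<r. v s)"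
    define B where "B = (\<Prod>s=r+1..<n+1. u s)"
    define W where "W = (\<Prod>s=j+1..<n+1. v s)"
    define C where "C = (\<Prod>s=r+1..<j+1. u s)"
    define D where "D = (\<Prod>s=1..<r+1. u s)"
    have e: "j+1+0 = j+1" "j+1+(k+(n-j)) = r+n" "j+1+(k+(n-j)+1) = r+n+1"
      unfolding r_def using r n k by simp_all
    have "(\<Prod>t=0..<k+(n-j). v (idx n (j+1+t))) = (\<Prod>s=j+1..<r+n. v (idx n s))"
      unfolding prod_shift e ..
    also have "\<dots> = (\<Prod>s=j+1..<n+1. v (idx n s)) * (\<Prod>s=n+1..<r+n. v (idx n s))"
      by (rule prod.atLeastLessThan_concat[symmetric]) (use r n in auto)
    also have "(\<Prod>s=j+1..<n+1. v (idx n s)) = W"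
      unfolding W_def by (rule prod_low) auto
    also have "(\<Prod>s=n+1..<r+n. v (idx n s)) = (\<Prod>s=1..<r. v s)"
      using prod_high[of n "n+1" "r+n" v] r n by simp
    finally have T1: "(\<Prod>t=0..<k+(n-j). v (idx n (j+1+t))) = W * A" unfolding A_def .
    have "(\<Prod>t=k+(n-j)+1..<n. u (idx n (j+1+t))) = (\<Prod>s=r+n+1..<j+1+n. u (idx n s))"
      unfolding prod_shift e ..
    also have "\<dots> = (\<Prod>s=r+1..<j+1. u s)"
      using prod_high[of n "r+n+1" "j+1+n" u] r n by simp
    finally have T2: "(\<Prod>t=k+(n-j)+1..<n. u (idx n (j+1+t))) = C" unfolding C_def .
    have pv: "(\<Prod>k=1..<n+1. v k) = V * W" unfolding V_def W_def
      by (rule prod.atLeastLessThan_concat[symmetric]) (use r n in auto)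
    have pu2: "(\<Prod>k=1..<n+1. u k) = D * B" unfolding D_def B_def
      by (rule prod.atLeastLessThan_concat[symmetric]) (use r n in auto)
    have UD: "U = D * C" unfolding D_def C_def U_def
      by (rule prod.atLeastLessThan_concat[symmetric]) (use r n in auto)
    have e2: "k+1 = r" unfolding r_def ..
    have "S r = c * A * B" unfolding S_def A_def B_def using r by simp
    moreover have "c = V * W / (D * B)" unfolding c_def pv pu2 ..
    moreover have "D * B \<noteq> 0" using pu pu2 by simp
    ultimately show ?thesis unfolding T_def T1 T2 UD e2 by (simp add: field_simps)
  qed
  have "sigma_c n u v j c * U = (\<Sum>k=0..<j. S (k+1) * U) + (\<Sum>k=0..<n-j. S (k+(j+1)) * U)"
    unfolding sig s1 a1 a2 distrib_right sum_distrib_right ..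
  also have "\<dots> = (\<Sum>k=0..<j. T (k+(n-j)) * V) + (\<Sum>k=0..<n-j. T k * V)"
    using c1 c2 by simp
  also have "\<dots> = kappa n u v (idx n (j+1)) * V"
    unfolding kap t1 b2 distrib_right sum_distrib_right by (rule add.commute)
  finally show ?thesis unfolding c_def U_def V_def .
qed

lemma alg:
  fixes s1 s0 U0 V0 ub vb K1 K0 :: complex
  assumes h1: "s1*(U0*ub) = K1*(V0*vb)" and h0: "s0*U0 = K0*V0"
    and nz: "U0\<noteq>0" "V0\<noteq>0" "ub\<noteq>0" "vb\<noteq>0"
  shows "ub*s1/s0 = vb*K1/K0 \<and> vb*s0/s1 = ub*K0/K1"
proof -
  have e1: "s1 = K1*V0*vb/(U0*ub)" using h1 nz by (simp add: field_simps)
  have e0: "s0 = K0*V0/U0" using h0 nz by (simp add: field_simps)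
  show ?thesis unfolding e1 e0 using nz
    by (cases "K0 = 0"; cases "K1 = 0") (simp_all add: field_simps)
qed

theorem proposition6p1:
  fixes m n i :: nat and x :: "nat \<Rightarrow> nat \<Rightarrow> complex"
  assumes nonzero: "\<forall>a\<in>{1..m}. \<forall>b\<in>{1..n}. x a b \<noteq> 0"
    and i_range: "1 \<le> i" "i + 1 \<le> m"
    and defined: "sigma n (x i) (x (i+1)) \<noteq> 0"
  shows "eps n i x / phi n i x = rowprod n x (i+1) / rowprod n x i
         \<and> s_op n i x = R_op n i x"
proof -
  define u where "u = x i"
  define v where "v = x (i+1)"
  have u: "\<forall>k\<in>{1..n}. u k \<noteq> 0" using nonzero i_range unfolding u_def by auto
  have v: "\<forall>k\<in>{1..n}. v k \<noteq> 0" using nonzero i_range unfolding v_def by auto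
  have n: "1 \<le> n"
  proof (rule ccontr)
    assume "\<not> 1 \<le> n" then have "n = 0" by simp
    then show False using defined unfolding sigma_def sigma_c_def by simp
  qed
  have P1: "eps n i x / phi n i x = rowprod n x (i+1) / rowprod n x i"
    unfolding eps_def phi_def using defined by (simp add: field_simps)
  define c where "c = eps n i x / phi n i x"
  have c: "c = (\<Prod>k=1..<n+1. v k) / (\<Prod>k=1..<n+1. u k)"
    unfolding c_def P1 rowprod_def u_def v_def ivl_cl ..
  define K where "K = kappa n u v"
  define sg where "sg k = sigma_c n u v k c" for k
  have P2: "s_op n i x a b = R_op n i x a b" for a b
  proof (cases "1 \<le> b \<and> b \<le> n")
    case False
    then show ?thesis unfolding s_op_def e_op_def R_op_def Let_def by auto
  next
    case True
    have k1: "sg b * (\<Prod>k=1..<b+1. u k) = K (idx n (b+1)) * (\<Prod>k=1..<b+1. v k)"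
      unfolding sg_def K_def c using key[OF n _ u, of b v] True by simp
    have k0: "sg (b-1) * (\<Prod>k=1..<b. u k) = K b * (\<Prod>k=1..<b. v k)"
    proof -
      have bn: "b-1 \<le> n" "b-1+1 = b" using True by auto
      show ?thesis using key[OF n bn(1) u, of v] idx_low[of b n] True unfolding bn(2) sg_def K_def c by simp
    qed
    have U: "(\<Prod>k=1..<b+1. u k) = (\<Prod>k=1..<b. u k) * u b"
      using True by (simp add: prod.atLeastLessThan_Suc)
    have V: "(\<Prod>k=1..<b+1. v k) = (\<Prod>k=1..<b. v k) * v b"
      using True by (simp add: prod.atLeastLessThan_Suc)
    have nzU: "(\<Prod>k=1..<b. u k) \<noteq> 0" using u True by (auto simp: prod_zero_iff)
    have nzV: "(\<Prod>k=1..<b. v k) \<noteq> 0" using v True by (auto simp: prod_zero_iff)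
    have A: "u b * sg b / sg (b-1) = v b * K (idx n (b+1)) / K b
           \<and> v b * sg (b-1) / sg b = u b * K b / K (idx n (b+1))"
      by (rule alg[OF k1[unfolded U V] k0 nzU nzV]) (use u v True in auto)
    have vS: "x (Suc i) = v" unfolding v_def by simp
    show ?thesis using True A
      unfolding s_op_def e_op_def R_op_def geomR_def Let_def
      by (simp add: sg_def K_def c_def[symmetric] u_def[symmetric] v_def[symmetric] vS)
  qed
  show ?thesis using P1 P2 by auto
qed

end
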